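(* For $\theta>0$ and an integer $n\ge1$, let $K_n(\theta)$ be a random variable with $P\{K_n(\theta)=k\}=|S_n^k|\theta^k/\theta_{(n)}$, $k=1,\dots,n$, where $\theta_{(n)}=\theta(\theta+1)\cdots(\theta+n-1)$ and $|S_n^k|$ is the coefficient of $\theta^k$ in $\theta_{(n)}$. Then, as $\theta\to\infty$, in probability: (Case A, $n$ fixed) $K_n(\theta)\to n$; (Case B, $n=n(\theta)\to\infty$, $\theta/n\to\infty$) $K_n(\theta)/n\to1$; (Case C, $n=n(\theta)\to\infty$, $\theta/n\to c\in(0,\infty)$) $K_n(\theta)/n\to\log\big(1+\frac1c\big)^c$; (Case D, $n=n(\theta)\to\infty$, $\theta/n\to0$) $K_n(\theta)/(\theta\log(n/\theta))\to1$.
   Context: $K_n(\theta)$ is the number of distinct alleles in a sample of size $n$ from a $PD(\theta)$ population. *)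

theory Defs
  imports "HOL-Analysis.Analysis" "HOL-Combinatorics.Stirling"
begin

definition K_pmf :: "nat \<Rightarrow> real \<Rightarrow> nat \<Rightarrow> real" where
  "K_pmf n \<theta> k = (if 1 \<le> k \<and> k \<le> n
     then real (stirling n k) * \<theta> ^ k / pochhammer \<theta> n else 0)"

definition K_prob :: "nat \<Rightarrow> real \<Rightarrow> nat set \<Rightarrow> real" where
  "K_prob n \<theta> A = (\<Sum>k\<in>{1..n} \<inter> A. K_pmf n \<theta> k)"

end

theory Submission imports Defs "HOL-Real_Asymp.Real_Asymp" begin

lemma stir_shift:
  fixes g :: "nat \<Rightarrow> real"
  shows "(\<Sum>k\<le>Suc n. g k * real (stirling (Suc n) k) * \<theta>^k)
     = real n * (\<Sum>k\<le>n. g k * real (stirling n k) * \<theta>^k)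
       + \<theta> * (\<Sum>k\<le>n. g (Suc k) * real (stirling n k) * \<theta>^k)"
proof -
  define G where "G j = g j * real (stirling n j) * \<theta>^j" for j
  have G0: "real n * G 0 = 0" by (cases n) (simp_all add: G_def)
  have GS: "G (Suc n) = 0" by (simp add: G_def)
  have "(\<Sum>k\<le>Suc n. g k * real (stirling (Suc n) k) * \<theta>^k)
      = (\<Sum>k\<le>n. g (Suc k) * real (stirling (Suc n) (Suc k)) * \<theta>^(Suc k))"
    by (subst sum.atMost_Suc_shift) simp
  also have "\<dots> = real n * (\<Sum>k\<le>n. G (Suc k)) + \<theta> * (\<Sum>k\<le>n. g (Suc k) * real (stirling n k) * \<theta>^k)"
    by (simp add: G_def sum_distrib_left sum.distrib algebra_simps)
  also have "(\<Sum>k\<le>n. G (Suc k)) = (\<Sum>k\<le>Suc n. G k) - G 0"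
    by (subst sum.atMost_Suc_shift) simp
  also have "real n * \<dots> = real n * (\<Sum>k\<le>n. G k)"
    using G0 GS by (simp add: algebra_simps)
  finally show ?thesis by (simp add: G_def)
qed

definition mu :: "nat \<Rightarrow> real \<Rightarrow> real" where "mu n \<theta> = (\<Sum>i<n. \<theta> / (\<theta> + real i))"
definition va :: "nat \<Rightarrow> real \<Rightarrow> real" where "va n \<theta> = (\<Sum>i<n. \<theta> * real i / (\<theta> + real i)^2)"

lemma mom0: "(\<Sum>k\<le>n. 1 * real (stirling n k) * \<theta>^k) = pochhammer \<theta> n"
  using stirling_pochhammer[of n \<theta>] by simp

lemma mom1: assumes "\<theta> > 0"
  shows "(\<Sum>k\<le>n. real k * real (stirling n k) * \<theta>^k) = pochhammer \<theta> n * mu n \<theta>"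
proof (induction n)
  case 0 show ?case by (simp add: mu_def)
next
  case (Suc n)
  have A: "(\<Sum>k\<le>Suc n. real k * real (stirling (Suc n) k) * \<theta>^k)
     = real n * (\<Sum>k\<le>n. real k * real (stirling n k) * \<theta>^k) + \<theta> * (\<Sum>k\<le>n. real (Suc k) * real (stirling n k) * \<theta>^k)"
    by (rule stir_shift)
  have B: "(\<Sum>k\<le>n. real (Suc k) * real (stirling n k) * \<theta>^k) = (\<Sum>k\<le>n. real k * real (stirling n k) * \<theta>^k) + (\<Sum>k\<le>n. 1 * real (stirling n k) * \<theta>^k)"
    by (simp add: algebra_simps sum.distrib)
  show ?case unfolding A B Suc.IH mom0 using assms
    by (simp add: pochhammer_Suc mu_def field_simps)
qed

lemma alg0: fixes t q P V M :: real assumes "q > 0"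
  shows "(q-t)*(P*(V+M^2)) + t*(P*(V+M^2) + 2*(P*M) + P) = P*q*((V + t*(q-t)/q^2) + (M + t/q)^2)"
  using assms by (simp add: field_simps power2_eq_square)
lemma alg: fixes t a P V M :: real assumes "t > 0" "a \<ge> 0"
  shows "a*(P*(V+M^2)) + t*(P*(V+M^2) + 2*(P*M) + P) = P*(t+a)*((V + t*a/(t+a)^2) + (M + t/(t+a))^2)"
  using alg0[of "t+a" t P V M] assms by simp

lemma mom2: assumes "\<theta> > 0"
  shows "(\<Sum>k\<le>n. (real k)^2 * real (stirling n k) * \<theta>^k) = pochhammer \<theta> n * (va n \<theta> + (mu n \<theta>)^2)"
proof (induction n)
  case 0 show ?case by (simp add: mu_def va_def)
next
  case (Suc n)
  have A: "(\<Sum>k\<le>Suc n. (real k)^2 * real (stirling (Suc n) k) * \<theta>^k)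
     = real n * (\<Sum>k\<le>n. (real k)^2 * real (stirling n k) * \<theta>^k) + \<theta> * (\<Sum>k\<le>n. (real (Suc k))^2 * real (stirling n k) * \<theta>^k)"
    by (rule stir_shift)
  have B: "(\<Sum>k\<le>n. (real (Suc k))^2 * real (stirling n k) * \<theta>^k) = (\<Sum>k\<le>n. (real k)^2 * real (stirling n k) * \<theta>^k) + 2 * (\<Sum>k\<le>n. real k * real (stirling n k) * \<theta>^k) + (\<Sum>k\<le>n. 1 * real (stirling n k) * \<theta>^k)"
    by (simp add: algebra_simps sum.distrib sum_distrib_left power2_eq_square)
  have m: "mu (Suc n) \<theta> = mu n \<theta> + \<theta>/(\<theta> + real n)" by (simp add: mu_def)
  have v: "va (Suc n) \<theta> = va n \<theta> + \<theta> * real n/(\<theta> + real n)^2" by (simp add: va_def)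
  have p: "pochhammer \<theta> n > 0" using assms by (rule pochhammer_pos)
  show ?case unfolding A B Suc.IH mom0 mom1[OF assms] m v pochhammer_Suc
    by (rule alg[OF assms]) simp
qed


lemma K_prob_nonneg: assumes "\<theta> > 0" shows "K_prob n \<theta> A \<ge> 0"
  unfolding K_prob_def K_pmf_def using pochhammer_pos[OF assms, of n] assms
  by (intro sum_nonneg) (auto intro!: divide_nonneg_pos)

lemma cheb:
  assumes th: "\<theta> > 0" and t: "t > 0" and A: "\<And>k. k \<in> A \<Longrightarrow> t < \<bar>real k - b\<bar>"
  shows "K_prob n \<theta> A \<le> (va n \<theta> + (mu n \<theta> - b)^2) / t^2"
proof -
  define P where "P = pochhammer \<theta> n"
  have P: "P > 0" unfolding P_def using th by (rule pochhammer_pos)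
  define w where "w k = real (stirling n k) * \<theta>^k / P" for k
  have w0: "w k \<ge> 0" for k using P th by (simp add: w_def)
  have "K_prob n \<theta> A = (\<Sum>k\<in>{1..n}\<inter>A. w k)"
    unfolding K_prob_def K_pmf_def w_def P_def by (intro sum.cong) auto
  also have "\<dots> \<le> (\<Sum>k\<in>{1..n}\<inter>A. w k * ((real k - b)^2 / t^2))"
  proof (intro sum_mono)
    fix k assume "k \<in> {1..n}\<inter>A"
    then have "t < \<bar>real k - b\<bar>" using A by auto
    then have "t^2 \<le> (real k - b)^2" using t
      by (metis abs_ge_zero less_imp_le power2_abs power_mono)
    then have "1 \<le> (real k - b)^2 / t^2" using t by simp
    then show "w k \<le> w k * ((real k - b)^2 / t^2)"
      using w0[of k] by (metis mult.right_neutral mult_left_mono)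
  qed
  also have "\<dots> \<le> (\<Sum>k\<in>{..n}. w k * ((real k - b)^2 / t^2))"
    using w0 by (intro sum_mono2) (auto intro!: divide_nonneg_nonneg mult_nonneg_nonneg)
  also have "\<dots> = ((\<Sum>k\<le>n. (real k)^2 * real (stirling n k) * \<theta>^k)
        - 2*b*(\<Sum>k\<le>n. real k * real (stirling n k) * \<theta>^k)
        + b^2 * (\<Sum>k\<le>n. 1 * real (stirling n k) * \<theta>^k)) / (P * t^2)"
    unfolding w_def
    by (simp add: sum_divide_distrib sum_distrib_left sum_subtractf sum.distrib power2_eq_square algebra_simps diff_divide_distrib add_divide_distrib)
  also have "\<dots> = (va n \<theta> + (mu n \<theta> - b)^2) / t^2"
    unfolding mom0 mom1[OF th] mom2[OF th] P_def[symmetric] using P t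
    by (simp add: field_simps power2_eq_square)
  finally show ?thesis .
qed

lemma va_nonneg: "\<theta> > 0 \<Longrightarrow> va n \<theta> \<ge> 0"
  unfolding va_def by (intro sum_nonneg) auto

lemma va_le_mu: assumes "\<theta> > 0" shows "va n \<theta> \<le> mu n \<theta>"
  unfolding va_def mu_def
proof (intro sum_mono)
  fix i assume "i \<in> {..<n}"
  have q: "\<theta> + real i > 0" using assms by simp
  have "\<theta> * real i / (\<theta> + real i)^2 = (\<theta> / (\<theta> + real i)) * (real i / (\<theta> + real i))"
    by (simp add: power2_eq_square)
  also have "\<dots> \<le> (\<theta> / (\<theta> + real i)) * 1"
    using q assms by (intro mult_left_mono) auto
  finally show "\<theta> * real i / (\<theta> + real i)^2 \<le> \<theta> / (\<theta> + real i)" by simp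
qed

lemma va_le_n_mu: assumes "\<theta> > 0" shows "va n \<theta> \<le> real n - mu n \<theta>"
proof -
  have "va n \<theta> \<le> (\<Sum>i<n. 1 - \<theta> / (\<theta> + real i))"
    unfolding va_def
  proof (intro sum_mono)
    fix i assume "i \<in> {..<n}"
    have q: "\<theta> + real i > 0" using assms by simp
    have "\<theta> * real i / (\<theta> + real i)^2 = (\<theta> / (\<theta> + real i)) * (real i / (\<theta> + real i))"
      by (simp add: power2_eq_square)
    also have "\<dots> \<le> 1 * (real i / (\<theta> + real i))"
      using q assms by (intro mult_right_mono) auto
    also have "\<dots> = 1 - \<theta> / (\<theta> + real i)" using q by (simp add: field_simps)
    finally show "\<theta> * real i / (\<theta> + real i)^2 \<le> 1 - \<theta> / (\<theta> + real i)" .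
  qed
  also have "\<dots> = real n - mu n \<theta>" by (simp add: mu_def sum_subtractf)
  finally show ?thesis .
qed

lemma mu_le_n: assumes "\<theta> > 0" shows "mu n \<theta> \<le> real n"
  using va_le_n_mu[OF assms, of n] va_nonneg[OF assms, of n] by simp

lemma mu_lower0: assumes "\<theta> > 0" shows "\<theta> * (ln (\<theta> + real n) - ln \<theta>) \<le> mu n \<theta>"
proof (induction n)
  case 0 show ?case by (simp add: mu_def)
next
  case (Suc n)
  have q: "\<theta> + real n > 0" using assms by simp
  have "ln ((\<theta> + real n + 1) / (\<theta> + real n)) \<le> (\<theta> + real n + 1) / (\<theta> + real n) - 1"
    using q by (intro ln_le_minus_one) simp
  also have "\<dots> = 1 / (\<theta> + real n)" using q by (simp add: field_simps)
  finally have "ln (\<theta> + real n + 1) - ln (\<theta> + real n) \<le> 1 / (\<theta> + real n)"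
    using q by (simp add: ln_div)
  then have "\<theta> * (ln (\<theta> + real n + 1) - ln (\<theta> + real n)) \<le> \<theta> / (\<theta> + real n)"
    using assms by (metis mult_left_mono less_imp_le times_divide_eq_right mult.right_neutral)
  then show ?case using Suc.IH by (simp add: mu_def algebra_simps)
qed

lemma mu_upper0: assumes "\<theta> > 0" shows "mu (Suc n) \<theta> \<le> 1 + \<theta> * (ln (\<theta> + real n) - ln \<theta>)"
proof (induction n)
  case 0 show ?case using assms by (simp add: mu_def)
next
  case (Suc n)
  have q: "\<theta> + real n > 0" using assms by simp
  have "ln ((\<theta> + real n) / (\<theta> + real n + 1)) \<le> (\<theta> + real n) / (\<theta> + real n + 1) - 1"
    using q by (intro ln_le_minus_one) simp
  also have "\<dots> = - (1 / (\<theta> + real n + 1))" using q by (simp add: field_simps)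
  finally have "1 / (\<theta> + real n + 1) \<le> ln (\<theta> + real n + 1) - ln (\<theta> + real n)"
    using q by (simp add: ln_div)
  then have "\<theta> / (\<theta> + real n + 1) \<le> \<theta> * (ln (\<theta> + real n + 1) - ln (\<theta> + real n))"
    using assms by (metis mult_left_mono less_imp_le times_divide_eq_right mult.right_neutral)
  then show ?case using Suc.IH by (simp add: mu_def algebra_simps)
qed

definition Lf :: "nat \<Rightarrow> real \<Rightarrow> real" where "Lf n \<theta> = \<theta> * ln (1 + real n / \<theta>)"

lemma Lf_alt: assumes "\<theta> > 0" shows "Lf n \<theta> = \<theta> * (ln (\<theta> + real n) - ln \<theta>)"
proof -
  have "1 + real n / \<theta> = (\<theta> + real n) / \<theta>" using assms by (simp add: field_simps)
  then show ?thesis unfolding Lf_def using assms by (simp add: ln_div)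
qed

lemma mu_lower: "\<theta> > 0 \<Longrightarrow> Lf n \<theta> \<le> mu n \<theta>"
  using mu_lower0 Lf_alt by simp

lemma mu_upper: assumes "\<theta> > 0" shows "mu n \<theta> \<le> 1 + Lf n \<theta>"
proof (cases n)
  case 0 then show ?thesis using assms by (simp add: mu_def Lf_def)
next
  case (Suc m)
  have "ln (\<theta> + real m) \<le> ln (\<theta> + real n)" using assms Suc by simp
  then have "\<theta> * (ln (\<theta> + real m) - ln \<theta>) \<le> \<theta> * (ln (\<theta> + real n) - ln \<theta>)"
    using assms by (intro mult_left_mono) auto
  then show ?thesis using mu_upper0[OF assms, of m] Suc Lf_alt[OF assms, of n] by simp
qed


lemma cheb_scaled:
  assumes th: "\<theta> > 0" and D: "D > 0" and e: "\<epsilon> > 0"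
  shows "K_prob n \<theta> {k. \<epsilon> < \<bar>real k / D - L\<bar>} \<le> (va n \<theta> + (mu n \<theta> - L*D)^2) / (\<epsilon>*D)^2"
proof (rule cheb[OF th])
  show "\<epsilon> * D > 0" using e D by simp
  fix k assume "k \<in> {k. \<epsilon> < \<bar>real k / D - L\<bar>}"
  then have "\<epsilon> < \<bar>real k / D - L\<bar>" by simp
  also have "real k / D - L = (real k - L*D) / D" using D by (simp add: field_simps)
  then have "\<bar>real k / D - L\<bar> = \<bar>real k - L*D\<bar> / D" using D by simp
  finally show "\<epsilon> * D < \<bar>real k - L * D\<bar>" using D by (simp add: field_simps)
qed

lemma caseA:
  assumes "\<epsilon> > 0"
  shows "((\<lambda>\<theta>. K_prob n \<theta> {k. \<bar>real k - real n\<bar> > \<epsilon>}) \<longlongrightarrow> 0) at_top"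
proof -
  have m: "((\<lambda>\<theta>. mu n \<theta>) \<longlongrightarrow> real n) at_top"
  proof -
    have "((\<lambda>\<theta>. \<Sum>i<n. \<theta> / (\<theta> + real i)) \<longlongrightarrow> (\<Sum>i<n. 1)) at_top"
      by (intro tendsto_sum) real_asymp
    then show ?thesis by (simp add: mu_def)
  qed
  have g: "((\<lambda>\<theta>. ((real n - mu n \<theta>) + (mu n \<theta> - real n)^2) / \<epsilon>^2) \<longlongrightarrow> ((real n - real n) + (real n - real n)^2) / \<epsilon>^2) at_top"
    by (intro tendsto_intros m) (use assms in auto)
  show ?thesis
  proof (rule tendsto_sandwich[OF _ _ tendsto_const g[simplified]])
    show "\<forall>\<^sub>F \<theta> in at_top. 0 \<le> K_prob n \<theta> {k. \<epsilon> < \<bar>real k - real n\<bar>}"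
      using eventually_gt_at_top[of 0] by eventually_elim (rule K_prob_nonneg)
    show "\<forall>\<^sub>F \<theta> in at_top. K_prob n \<theta> {k. \<epsilon> < \<bar>real k - real n\<bar>} \<le> ((real n - mu n \<theta>) + (mu n \<theta> - real n)^2) / \<epsilon>^2"
      using eventually_gt_at_top[of 0]
    proof eventually_elim
      case (elim \<theta>)
      have "K_prob n \<theta> {k. \<epsilon> < \<bar>real k - real n\<bar>} \<le> (va n \<theta> + (mu n \<theta> - real n)^2) / \<epsilon>^2"
        by (rule cheb[OF elim assms]) simp
      also have "\<dots> \<le> ((real n - mu n \<theta>) + (mu n \<theta> - real n)^2) / \<epsilon>^2"
        using va_le_n_mu[OF elim, of n] by (intro divide_right_mono) auto
      finally show ?case .
    qed
  qed
qed


definition hh :: "real \<Rightarrow> real" where "hh y = y * ln (1 + 1/y)"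

lemma ev_nf: assumes "filterlim nf at_top at_top"
  shows "\<forall>\<^sub>F \<theta> in at_top. (\<theta>::real) > 0 \<and> nf \<theta> \<ge> (1::nat)"
  using eventually_gt_at_top[of 0] filterlim_at_top[THEN iffD1, OF assms, rule_format, of 1]
  by eventually_elim auto

lemma inv_nf: assumes "filterlim (nf :: real \<Rightarrow> nat) at_top at_top"
  shows "((\<lambda>\<theta>. 1 / real (nf \<theta>)) \<longlongrightarrow> 0) at_top"
proof -
  have "filterlim (\<lambda>\<theta>. real (nf \<theta>)) at_top at_top"
    by (rule filterlim_compose[OF filterlim_real_sequentially assms])
  from tendsto_inverse_0_at_top[OF this] show ?thesis by (simp add: inverse_eq_divide)
qed

lemma Lf_div: assumes "\<theta> > 0" "N > 0" shows "Lf N \<theta> / real N = hh (\<theta> / real N)"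
  unfolding Lf_def hh_def using assms by simp

lemma caseBC:
  assumes nf: "filterlim nf at_top at_top" and hl: "((\<lambda>\<theta>. hh (\<theta> / real (nf \<theta>))) \<longlongrightarrow> L) at_top"
    and e: "\<epsilon> > 0"
  shows "((\<lambda>\<theta>. K_prob (nf \<theta>) \<theta> {k. \<bar>real k / real (nf \<theta>) - L\<bar> > \<epsilon>}) \<longlongrightarrow> 0) at_top"
proof -
  note ev = ev_nf[OF nf]
  note iv = inv_nf[OF nf]
  have m: "((\<lambda>\<theta>. mu (nf \<theta>) \<theta> / real (nf \<theta>)) \<longlongrightarrow> L) at_top"
  proof (rule tendsto_sandwich[OF _ _ hl])
    show "\<forall>\<^sub>F \<theta> in at_top. hh (\<theta> / real (nf \<theta>)) \<le> mu (nf \<theta>) \<theta> / real (nf \<theta>)"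
      using ev
    proof eventually_elim
      case (elim \<theta>)
      then show ?case using Lf_div[of \<theta> "nf \<theta>"] mu_lower[of \<theta> "nf \<theta>"]
        by (metis divide_right_mono of_nat_0_le_iff less_le_trans zero_less_one of_nat_0_less_iff)
    qed
    show "\<forall>\<^sub>F \<theta> in at_top. mu (nf \<theta>) \<theta> / real (nf \<theta>) \<le> hh (\<theta> / real (nf \<theta>)) + 1 / real (nf \<theta>)"
      using ev
    proof eventually_elim
      case (elim \<theta>)
      then have N: "real (nf \<theta>) > 0" by simp
      have "mu (nf \<theta>) \<theta> / real (nf \<theta>) \<le> (1 + Lf (nf \<theta>) \<theta>) / real (nf \<theta>)"
        using mu_upper[of \<theta> "nf \<theta>"] elim N by (intro divide_right_mono) auto
      also have "\<dots> = hh (\<theta> / real (nf \<theta>)) + 1 / real (nf \<theta>)"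
        using Lf_div[of \<theta> "nf \<theta>"] elim by (simp add: add_divide_distrib)
      finally show ?case .
    qed
    show "((\<lambda>\<theta>. hh (\<theta> / real (nf \<theta>)) + 1 / real (nf \<theta>)) \<longlongrightarrow> L) at_top"
      using tendsto_add[OF hl iv] by simp
  qed
  have g: "((\<lambda>\<theta>. (1 / real (nf \<theta>) + (mu (nf \<theta>) \<theta> / real (nf \<theta>) - L)^2) / \<epsilon>^2) \<longlongrightarrow> (0 + (L - L)^2) / \<epsilon>^2) at_top"
    by (intro tendsto_intros m iv) (use e in auto)
  show ?thesis
  proof (rule tendsto_sandwich[OF _ _ tendsto_const g[simplified]])
    show "\<forall>\<^sub>F \<theta> in at_top. 0 \<le> K_prob (nf \<theta>) \<theta> {k. \<epsilon> < \<bar>real k / real (nf \<theta>) - L\<bar>}"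
      using ev by eventually_elim (auto intro: K_prob_nonneg)
    show "\<forall>\<^sub>F \<theta> in at_top. K_prob (nf \<theta>) \<theta> {k. \<epsilon> < \<bar>real k / real (nf \<theta>) - L\<bar>}
       \<le> (1 / real (nf \<theta>) + (mu (nf \<theta>) \<theta> / real (nf \<theta>) - L)^2) / \<epsilon>^2"
      using ev
    proof eventually_elim
      case (elim \<theta>)
      define N where "N = real (nf \<theta>)"
      have N: "N > 0" using elim by (simp add: N_def)
      have th: "\<theta> > 0" using elim by simp
      have "K_prob (nf \<theta>) \<theta> {k. \<epsilon> < \<bar>real k / N - L\<bar>} \<le> (va (nf \<theta>) \<theta> + (mu (nf \<theta>) \<theta> - L*N)^2) / (\<epsilon>*N)^2"
        by (rule cheb_scaled[OF th N e])
      also have "\<dots> \<le> (N + (mu (nf \<theta>) \<theta> - L*N)^2) / (\<epsilon>*N)^2"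
        using va_le_mu[OF th, of "nf \<theta>"] mu_le_n[OF th, of "nf \<theta>"]
        by (intro divide_right_mono) (auto simp: N_def)
      also have "\<dots> = (1 / N + (mu (nf \<theta>) \<theta> / N - L)^2) / \<epsilon>^2"
        using N e by (simp add: field_simps power2_eq_square)
      finally show ?case by (simp add: N_def)
    qed
  qed
qed


lemma caseD:
  assumes nf: "filterlim nf at_top at_top" and h0: "((\<lambda>\<theta>. \<theta> / real (nf \<theta>)) \<longlongrightarrow> 0) at_top"
    and e: "\<epsilon> > 0"
  shows "((\<lambda>\<theta>. K_prob (nf \<theta>) \<theta> {k. \<bar>real k / (\<theta> * ln (real (nf \<theta>) / \<theta>)) - 1\<bar> > \<epsilon>}) \<longlongrightarrow> 0) at_top"
proof -
  note ev = ev_nf[OF nf]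
  have evp: "\<forall>\<^sub>F \<theta> in at_top. \<theta> / real (nf \<theta>) > 0"
    using ev by eventually_elim auto
  have x: "filterlim (\<lambda>\<theta>. real (nf \<theta>) / \<theta>) at_top at_top"
    using filterlim_inverse_at_top[OF h0 evp] by simp
  have lx: "filterlim (\<lambda>\<theta>. ln (real (nf \<theta>) / \<theta>)) at_top at_top"
    by (rule filterlim_compose[OF ln_at_top x])
  have ev1: "\<forall>\<^sub>F \<theta> in at_top. ln (real (nf \<theta>) / \<theta>) \<ge> 1"
    using filterlim_at_top[THEN iffD1, OF lx, rule_format, of 1] by simp
  define D where "D \<theta> = \<theta> * ln (real (nf \<theta>) / \<theta>)" for \<theta>
  have ev2: "\<forall>\<^sub>F \<theta> in at_top. \<theta> > 0 \<and> nf \<theta> \<ge> 1 \<and> D \<theta> \<ge> \<theta>"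
    using ev ev1
  proof eventually_elim
    case (elim \<theta>)
    then have "\<theta> * 1 \<le> D \<theta>" unfolding D_def by (intro mult_left_mono) auto
    then show ?case using elim by simp
  qed
  have Dinf: "filterlim D at_top at_top"
    by (rule filterlim_at_top_mono[OF filterlim_ident]) (use ev2 in \<open>eventually_elim, auto\<close>)
  have iD: "((\<lambda>\<theta>. 1 / D \<theta>) \<longlongrightarrow> 0) at_top"
    using tendsto_inverse_0_at_top[OF Dinf] by (simp add: inverse_eq_divide)
  have ga: "((\<lambda>x::real. ln (1 + x) / ln x) \<longlongrightarrow> 1) at_top" by real_asymp
  have r: "((\<lambda>\<theta>. ln (1 + real (nf \<theta>) / \<theta>) / ln (real (nf \<theta>) / \<theta>)) \<longlongrightarrow> 1) at_top"
    by (rule filterlim_compose[OF ga x])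
  have LD: "Lf (nf \<theta>) \<theta> / D \<theta> = ln (1 + real (nf \<theta>) / \<theta>) / ln (real (nf \<theta>) / \<theta>)" if "\<theta> > 0" for \<theta>
    unfolding Lf_def D_def using that by simp
  have m: "((\<lambda>\<theta>. mu (nf \<theta>) \<theta> / D \<theta>) \<longlongrightarrow> 1) at_top"
  proof (rule tendsto_sandwich[OF _ _ r])
    show "\<forall>\<^sub>F \<theta> in at_top. ln (1 + real (nf \<theta>) / \<theta>) / ln (real (nf \<theta>) / \<theta>) \<le> mu (nf \<theta>) \<theta> / D \<theta>"
      using ev2
    proof eventually_elim
      case (elim \<theta>)
      then show ?case using LD[of \<theta>] mu_lower[of \<theta> "nf \<theta>"]
        by (metis divide_right_mono less_le_trans less_imp_le)
    qed
    show "\<forall>\<^sub>F \<theta> in at_top. mu (nf \<theta>) \<theta> / D \<theta> \<le> ln (1 + real (nf \<theta>) / \<theta>) / ln (real (nf \<theta>) / \<theta>) + 1 / D \<theta>"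
      using ev2
    proof eventually_elim
      case (elim \<theta>)
      have "mu (nf \<theta>) \<theta> / D \<theta> \<le> (1 + Lf (nf \<theta>) \<theta>) / D \<theta>"
        using mu_upper[of \<theta> "nf \<theta>"] elim by (intro divide_right_mono) auto
      also have "\<dots> = ln (1 + real (nf \<theta>) / \<theta>) / ln (real (nf \<theta>) / \<theta>) + 1 / D \<theta>"
        using LD[of \<theta>] elim by (simp add: add_divide_distrib)
      finally show ?case .
    qed
    show "((\<lambda>\<theta>. ln (1 + real (nf \<theta>) / \<theta>) / ln (real (nf \<theta>) / \<theta>) + 1 / D \<theta>) \<longlongrightarrow> 1) at_top"
      using tendsto_add[OF r iD] by simp
  qed
  have g0: "((\<lambda>\<theta>. ((mu (nf \<theta>) \<theta> / D \<theta>) * (1 / D \<theta>) + (mu (nf \<theta>) \<theta> / D \<theta> - 1)^2) / \<epsilon>^2) \<longlongrightarrow> (1 * 0 + (1 - 1)^2) / \<epsilon>^2) at_top"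
    by (intro tendsto_intros m iD) (use e in auto)
  have g: "((\<lambda>\<theta>. ((mu (nf \<theta>) \<theta> / D \<theta>) * (1 / D \<theta>) + (mu (nf \<theta>) \<theta> / D \<theta> - 1)^2) / \<epsilon>^2) \<longlongrightarrow> 0) at_top"
    using g0 by simp
  have "((\<lambda>\<theta>. K_prob (nf \<theta>) \<theta> {k. \<bar>real k / D \<theta> - 1\<bar> > \<epsilon>}) \<longlongrightarrow> 0) at_top"
  proof (rule tendsto_sandwich[OF _ _ tendsto_const g])
    show "\<forall>\<^sub>F \<theta> in at_top. 0 \<le> K_prob (nf \<theta>) \<theta> {k. \<epsilon> < \<bar>real k / D \<theta> - 1\<bar>}"
      using ev by eventually_elim (auto intro: K_prob_nonneg)
    show "\<forall>\<^sub>F \<theta> in at_top. K_prob (nf \<theta>) \<theta> {k. \<epsilon> < \<bar>real k / D \<theta> - 1\<bar>}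
       \<le> ((mu (nf \<theta>) \<theta> / D \<theta>) * (1 / D \<theta>) + (mu (nf \<theta>) \<theta> / D \<theta> - 1)^2) / \<epsilon>^2"
      using ev2
    proof eventually_elim
      case (elim \<theta>)
      have th: "\<theta> > 0" using elim by simp
      have Dp: "D \<theta> > 0" using elim by simp
      have "K_prob (nf \<theta>) \<theta> {k. \<epsilon> < \<bar>real k / D \<theta> - 1\<bar>} \<le> (va (nf \<theta>) \<theta> + (mu (nf \<theta>) \<theta> - 1 * D \<theta>)^2) / (\<epsilon> * D \<theta>)^2"
        by (rule cheb_scaled[OF th Dp e])
      also have "\<dots> \<le> (mu (nf \<theta>) \<theta> + (mu (nf \<theta>) \<theta> - 1 * D \<theta>)^2) / (\<epsilon> * D \<theta>)^2"
        using va_le_mu[OF th, of "nf \<theta>"] by (intro divide_right_mono) auto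
      also have "\<dots> = ((mu (nf \<theta>) \<theta> / D \<theta>) * (1 / D \<theta>) + (mu (nf \<theta>) \<theta> / D \<theta> - 1)^2) / \<epsilon>^2"
        using Dp e by (simp add: field_simps power2_eq_square)
      finally show ?case .
    qed
  qed
  then show ?thesis by (simp add: D_def)
qed

theorem corollary4p1:
  shows
  "(\<forall>n::nat. n \<ge> 1 \<longrightarrow> (\<forall>\<epsilon>>0.
      ((\<lambda>\<theta>. K_prob n \<theta> {k. \<bar>real k - real n\<bar> > \<epsilon>}) \<longlongrightarrow> 0) at_top))
   \<and> (\<forall>nf :: real \<Rightarrow> nat. filterlim nf at_top at_top \<longrightarrow>
        filterlim (\<lambda>\<theta>. \<theta> / real (nf \<theta>)) at_top at_top \<longrightarrow>
        (\<forall>\<epsilon>>0. ((\<lambda>\<theta>. K_prob (nf \<theta>) \<theta>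
            {k. \<bar>real k / real (nf \<theta>) - 1\<bar> > \<epsilon>}) \<longlongrightarrow> 0) at_top))
   \<and> (\<forall>(nf :: real \<Rightarrow> nat) (c::real). c > 0 \<longrightarrow> filterlim nf at_top at_top \<longrightarrow>
        ((\<lambda>\<theta>. \<theta> / real (nf \<theta>)) \<longlongrightarrow> c) at_top \<longrightarrow>
        (\<forall>\<epsilon>>0. ((\<lambda>\<theta>. K_prob (nf \<theta>) \<theta>
            {k. \<bar>real k / real (nf \<theta>) - ln ((1 + 1 / c) powr c)\<bar> > \<epsilon>}) \<longlongrightarrow> 0) at_top))
   \<and> (\<forall>nf :: real \<Rightarrow> nat. filterlim nf at_top at_top \<longrightarrow>
        ((\<lambda>\<theta>. \<theta> / real (nf \<theta>)) \<longlongrightarrow> 0) at_top \<longrightarrow>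
        (\<forall>\<epsilon>>0. ((\<lambda>\<theta>. K_prob (nf \<theta>) \<theta>
            {k. \<bar>real k / (\<theta> * ln (real (nf \<theta>) / \<theta>)) - 1\<bar> > \<epsilon>}) \<longlongrightarrow> 0) at_top))"
  proof (intro conjI allI impI)
  fix n :: nat and \<epsilon> :: real assume "\<epsilon> > 0"
  then show "((\<lambda>\<theta>. K_prob n \<theta> {k. \<bar>real k - real n\<bar> > \<epsilon>}) \<longlongrightarrow> 0) at_top" by (rule caseA)
next
  fix nf :: "real \<Rightarrow> nat" and \<epsilon> :: real
  assume nf: "filterlim nf at_top at_top" and h: "filterlim (\<lambda>\<theta>. \<theta> / real (nf \<theta>)) at_top at_top" and e: "\<epsilon> > 0"
  have ga: "((\<lambda>y. hh y) \<longlongrightarrow> 1) at_top" unfolding hh_def by real_asymp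
  show "((\<lambda>\<theta>. K_prob (nf \<theta>) \<theta> {k. \<bar>real k / real (nf \<theta>) - 1\<bar> > \<epsilon>}) \<longlongrightarrow> 0) at_top"
    by (rule caseBC[OF nf filterlim_compose[OF ga h] e])
next
  fix nf :: "real \<Rightarrow> nat" and c \<epsilon> :: real
  assume c: "c > 0" and nf: "filterlim nf at_top at_top" and h: "((\<lambda>\<theta>. \<theta> / real (nf \<theta>)) \<longlongrightarrow> c) at_top" and e: "\<epsilon> > 0"
  have "((\<lambda>\<theta>. hh (\<theta> / real (nf \<theta>))) \<longlongrightarrow> c * ln (1 + 1/c)) at_top"
  proof -
    have cp: "0 < 1 + 1/c" using c by (simp add: add_pos_pos)
    show ?thesis unfolding hh_def using c cp by (intro tendsto_intros h) auto
  qed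
  then have "((\<lambda>\<theta>. hh (\<theta> / real (nf \<theta>))) \<longlongrightarrow> ln ((1 + 1 / c) powr c)) at_top"
    by simp
  then show "((\<lambda>\<theta>. K_prob (nf \<theta>) \<theta>
            {k. \<bar>real k / real (nf \<theta>) - ln ((1 + 1 / c) powr c)\<bar> > \<epsilon>}) \<longlongrightarrow> 0) at_top"
    by (rule caseBC[OF nf _ e])
next
  fix nf :: "real \<Rightarrow> nat" and \<epsilon> :: real
  assume nf: "filterlim nf at_top at_top" and h: "((\<lambda>\<theta>. \<theta> / real (nf \<theta>)) \<longlongrightarrow> 0) at_top" and e: "\<epsilon> > 0"
  show "((\<lambda>\<theta>. K_prob (nf \<theta>) \<theta>
            {k. \<bar>real k / (\<theta> * ln (real (nf \<theta>) / \<theta>)) - 1\<bar> > \<epsilon>}) \<longlongrightarrow> 0) at_top"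
    by (rule caseD[OF nf h e])
qed

end
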